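(* Let $g:[a,b]\to\mathbb R$ be a derivator with $D_g$ finite; write $D_g=\{x_1<x_2<\dots<x_{n-1}\}$ and set $x_0=a$, $x_n=b$ (so $x_1=a$ if $a\in D_g$). Then the linear map $$\Psi:\mathrm{UC}_g([a,b])\to\mathrm{UC}_{g^C}([x_0,x_1])\oplus\bigoplus_{j=2}^n\mathrm{UC}_{g^C}((x_{j-1},x_j]),\qquad \Psi(f)=\big(f|_{[x_0,x_1]},f|_{(x_1,x_2]},\dots,f|_{(x_{n-1},x_n]}\big),$$ is an isometric isomorphism, where the direct sum carries the norm $\|(v_1,\dots,v_n)\|=\max_j\|v_j\|_\infty$.
   Context: $\mathbb F\in\{\mathbb R,\mathbb C\}$. A derivator is a nondecreasing, left-continuous $g:[a,b]\to\mathbb R$. For $x\in[a,b)$, $\Delta g(x)=g(x^+)-g(x)$ and $D_g=\{x\in[a,b):\Delta g(x)>0\}$. The jump part is $g^B(x)=\sum_{y\in[a,x)\cap D_g}\Delta g(y)$ and the continuous part is $g^C=g-g^B$ (a continuous derivator). For a derivator $h$ and a set $J\subset[a,b]$ (here an interval), $\mathrm{UC}_h(J)$ is the space of functions $f:J\to\mathbb F$ that are uniformly $h$-continuous on $J$ (for every $\varepsilon>0$ there is $\delta>0$ such that for all $x,y\in J$, $|h(x)-h(y)|<\delta$ implies $|f(x)-f(y)|<\varepsilon$), with the supremum norm over $J$. $\mathrm{UC}_g([a,b])$ is this space for $h=g$, $J=[a,b]$. *)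

theory Defs
  imports "HOL-Analysis.Analysis"
begin

definition derivator :: "(real \<Rightarrow> real) \<Rightarrow> real \<Rightarrow> real \<Rightarrow> bool" where
  "derivator g a b \<longleftrightarrow> mono_on {a..b} g \<and>
     (\<forall>x\<in>{a<..b}. (g \<longlongrightarrow> g x) (at_left x))"

definition jump :: "(real \<Rightarrow> real) \<Rightarrow> real \<Rightarrow> real" where
  "jump g x = Lim (at_right x) g - g x"

definition Dg :: "(real \<Rightarrow> real) \<Rightarrow> real \<Rightarrow> real \<Rightarrow> real set" where
  "Dg g a b = {x \<in> {a..<b}. jump g x > 0}"

definition gB :: "(real \<Rightarrow> real) \<Rightarrow> real \<Rightarrow> real \<Rightarrow> real \<Rightarrow> real" where
  "gB g a b x = infsum (jump g) ({a..<x} \<inter> Dg g a b)"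

definition gC :: "(real \<Rightarrow> real) \<Rightarrow> real \<Rightarrow> real \<Rightarrow> real \<Rightarrow> real" where
  "gC g a b x = g x - gB g a b x"

definition unif_cont_wrt ::
  "(real \<Rightarrow> real) \<Rightarrow> real set \<Rightarrow> (real \<Rightarrow> 'a::real_normed_vector) \<Rightarrow> bool" where
  "unif_cont_wrt h J f \<longleftrightarrow>
     (\<forall>\<epsilon>>0. \<exists>\<delta>>0. \<forall>x\<in>J. \<forall>y\<in>J. \<bar>h x - h y\<bar> < \<delta> \<longrightarrow> norm (f x - f y) < \<epsilon>)"

text \<open>The space UC_h(J); functions on J are represented extensionally
  (value 0 outside J).\<close>
definition UC :: "(real \<Rightarrow> real) \<Rightarrow> real set \<Rightarrow> (real \<Rightarrow> 'a::real_normed_vector) set" where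
  "UC h J = {f. (\<forall>x. x \<notin> J \<longrightarrow> f x = 0) \<and> unif_cont_wrt h J f}"

definition restr :: "real set \<Rightarrow> (real \<Rightarrow> 'a::zero) \<Rightarrow> real \<Rightarrow> 'a" where
  "restr J f = (\<lambda>x. if x \<in> J then f x else 0)"

definition supnorm :: "real set \<Rightarrow> (real \<Rightarrow> 'a::real_normed_vector) \<Rightarrow> real" where
  "supnorm J f = (SUP x\<in>J. norm (f x))"

definition nparts :: "(real \<Rightarrow> real) \<Rightarrow> real \<Rightarrow> real \<Rightarrow> nat" where
  "nparts g a b = card (Dg g a b) + 1"

definition node :: "(real \<Rightarrow> real) \<Rightarrow> real \<Rightarrow> real \<Rightarrow> nat \<Rightarrow> real" where
  "node g a b j = (if j = 0 then a else if j = nparts g a b then b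
                   else sorted_list_of_set (Dg g a b) ! (j - 1))"

definition piece :: "(real \<Rightarrow> real) \<Rightarrow> real \<Rightarrow> real \<Rightarrow> nat \<Rightarrow> real set" where
  "piece g a b j = (if j = 1 then {node g a b 0 .. node g a b 1}
                    else {node g a b (j - 1) <.. node g a b j})"

definition Psi :: "(real \<Rightarrow> real) \<Rightarrow> real \<Rightarrow> real \<Rightarrow> (real \<Rightarrow> 'a::zero) \<Rightarrow> nat \<Rightarrow> real \<Rightarrow> 'a" where
  "Psi g a b f = (\<lambda>j. if j \<in> {1..nparts g a b} then restr (piece g a b j) f else (\<lambda>_. 0))"

end

theory Submission
  imports Defs
begin


lemma jump_gap:
  assumes der: "derivator g a b" and p: "a \<le> p" "p < b" and x: "a \<le> x" "x \<le> p"
    and y: "p < y" "y \<le> b"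
  shows "jump g p \<le> g y - g x"
proof -
  have mono: "mono_on {a..b} g" using der by (simp add: derivator_def)
  let ?I = "{a..b}"
  have m1: "g u \<le> g v" if "u \<in> ?I" "v \<in> ?I" "p < u" "u \<le> v" for u v
    using mono_onD[OF mono that(1,2,4)] .
  have m2: "g p \<le> g u" if "u \<in> ?I" "p < u" for u
  proof -
    have "p \<in> ?I" using p by simp
    then show ?thesis using mono_onD[OF mono _ that(1)] that(2) by simp
  qed
  have lim: "(g \<longlongrightarrow> Inf (g ` ({p<..} \<inter> ?I))) (at p within ({p<..} \<inter> ?I))"
    by (rule Lim_right_bound[where K="g p", OF m1 m2])
  have s: "{p<..} \<inter> ?I \<inter> {..<b} - {p} = {p<..} \<inter> {..<b} - {p}"
    using p by auto
  have eq: "at p within ({p<..} \<inter> ?I) = at_right p"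
    by (rule at_within_nhd[of p "{..<b}"]) (use p s in simp_all)
  have lim2: "(g \<longlongrightarrow> Inf (g ` ({p<..} \<inter> ?I))) (at_right p)" using lim eq by simp
  have L: "Lim (at_right p) g = Inf (g ` ({p<..} \<inter> ?I))"
    using lim2 by (intro tendsto_Lim) auto
  have bdd: "bdd_below (g ` ({p<..} \<inter> ?I))"
    by (rule bdd_belowI2[where m="g p"]) (use m2 in auto)
  have "Inf (g ` ({p<..} \<inter> ?I)) \<le> g y"
    by (rule cInf_lower[OF _ bdd]) (use y p in auto)
  moreover have "g x \<le> g p" by (rule mono_onD[OF mono]) (use x p in auto)
  ultimately show ?thesis unfolding jump_def L by simp
qed

lemma uc_bounded:
  fixes f :: "real \<Rightarrow> 'a::real_normed_vector"
  assumes mono: "mono_on {a..b} g" and ab: "a \<le> b" and uc: "unif_cont_wrt g {a..b} f"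
  shows "\<exists>B. \<forall>x\<in>{a..b}. norm (f x) \<le> B"
proof -
  obtain d where d: "d > 0" "\<And>x y. x\<in>{a..b} \<Longrightarrow> y\<in>{a..b} \<Longrightarrow> \<bar>g x - g y\<bar> < d \<Longrightarrow> norm (f x - f y) < 1"
    using uc unfolding unif_cont_wrt_def by (meson zero_less_one)
  have nf: "norm (f x) \<le> norm (f y) + 1" if "x\<in>{a..b}" "y\<in>{a..b}" "\<bar>g x - g y\<bar> < d" for x y
    using d(2)[OF that] norm_triangle_ineq2[of "f x" "f y"] by linarith
  have step: "\<exists>B. \<forall>x\<in>{a..b}. g x \<le> g a + real k * (d/2) \<longrightarrow> norm (f x) \<le> B" for k
  proof (induction k)
    case 0
    show ?case
    proof (intro exI ballI impI)
      fix x assume x: "x \<in> {a..b}" "g x \<le> g a + real 0 * (d/2)"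
      have "g a \<le> g x" by (rule mono_onD[OF mono]) (use x ab in auto)
      then show "norm (f x) \<le> norm (f a) + 1" using x d ab by (intro nf) auto
    qed
  next
    case (Suc k)
    then obtain B where B: "\<forall>x\<in>{a..b}. g x \<le> g a + real k * (d/2) \<longrightarrow> norm (f x) \<le> B" by blast
    show ?case
    proof (cases "\<exists>x0\<in>{a..b}. g a + real k * (d/2) < g x0 \<and> g x0 \<le> g a + real (Suc k) * (d/2)")
      case True
      then obtain x0 where x0: "x0\<in>{a..b}" "g a + real k * (d/2) < g x0" "g x0 \<le> g a + real (Suc k) * (d/2)" by blast
      show ?thesis
      proof (intro exI[of _ "max B (norm (f x0) + 1)"] ballI impI)
        fix x assume x: "x \<in> {a..b}" "g x \<le> g a + real (Suc k) * (d/2)"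
        show "norm (f x) \<le> max B (norm (f x0) + 1)"
        proof (cases "g x \<le> g a + real k * (d/2)")
          case True then show ?thesis using B x by force
        next
          case False
          have e: "real (Suc k) * (d/2) = real k * (d/2) + d/2" by (simp add: algebra_simps)
          have "\<bar>g x - g x0\<bar> < d" unfolding abs_less_iff using False x x0 d(1) e by linarith
          then show ?thesis using nf[OF x(1) x0(1)] by linarith
        qed
      qed
    next
      case False
      show ?thesis
      proof (intro exI[of _ B] ballI impI)
        fix x assume x: "x \<in> {a..b}" "g x \<le> g a + real (Suc k) * (d/2)"
        then have "g x \<le> g a + real k * (d/2)" using False by force
        then show "norm (f x) \<le> B" using B x by blast
      qed
    qed
  qed
  obtain k where k: "(g b - g a) / (d/2) \<le> real k" using real_arch_simple by blast
  then have "g b - g a \<le> real k * (d/2)" using d(1) by (simp add: divide_le_eq)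
  then obtain B where B: "\<forall>x\<in>{a..b}. g x \<le> g a + real k * (d/2) \<longrightarrow> norm (f x) \<le> B"
    using step by blast
  have "g x \<le> g b" if "x \<in> {a..b}" for x using mono that ab by (auto intro: mono_onD)
  then show ?thesis using B \<open>g b - g a \<le> real k * (d/2)\<close> by force
qed



locale setting =
  fixes g :: "real \<Rightarrow> real" and a b :: real
  assumes ab: "a < b" and der: "derivator g a b" and fin: "finite (Dg g a b)"
begin

abbreviation "D \<equiv> Dg g a b"
abbreviation "L \<equiv> sorted_list_of_set D"
abbreviation "m \<equiv> card D"
abbreviation "N \<equiv> nparts g a b"

lemma N_eq: "N = m + 1" by (simp add: nparts_def)
lemma L_set: "set L = D" using fin by simp
lemma L_len: "length L = m" by simp
lemma L_sorted: "sorted_wrt (<) L" by (rule strict_sorted_list_of_set)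
lemma D_sub: "D \<subseteq> {a..<b}" by (auto simp: Dg_def)
lemma mono: "mono_on {a..b} g" using der by (simp add: derivator_def)

lemma node_L: "1 \<le> j \<Longrightarrow> j \<le> m \<Longrightarrow> node g a b j = L ! (j - 1)"
  by (simp add: node_def N_eq)
lemma node_0: "node g a b 0 = a" by (simp add: node_def)
lemma node_N: "node g a b N = b" by (simp add: node_def N_eq)

lemma node_in_D: "1 \<le> j \<Longrightarrow> j \<le> m \<Longrightarrow> node g a b j \<in> D"
proof -
  assume j: "1 \<le> j" "j \<le> m"
  have "j - 1 < length L" using j L_len by linarith
  then have "L ! (j - 1) \<in> set L" by (rule nth_mem)
  then show ?thesis using node_L[OF j] L_set by simp
qed

lemma node_bounds: "j \<le> N \<Longrightarrow> a \<le> node g a b j \<and> node g a b j \<le> b"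
proof -
  assume j: "j \<le> N"
  consider "j = 0" | "j = N" | "1 \<le> j \<and> j \<le> m" using j N_eq by linarith
  then show ?thesis
  proof cases
    case 3 then show ?thesis using node_in_D[of j] D_sub by auto
  qed (use ab node_0 node_N in auto)
qed

lemma node_strict: "1 \<le> i \<Longrightarrow> i < k \<Longrightarrow> k \<le> N \<Longrightarrow> node g a b i < node g a b k"
proof -
  assume h: "1 \<le> i" "i < k" "k \<le> N"
  show ?thesis
  proof (cases "k = N")
    case True
    then show ?thesis using node_in_D[of i] D_sub h N_eq node_N by auto
  next
    case False
    then have "k \<le> m" using h N_eq by linarith
    then show ?thesis using node_L[of i] node_L[of k] h
      sorted_wrt_nth_less[OF L_sorted, of "i - 1" "k - 1"] by simp
  qed
qed

lemma node_mono: "i \<le> k \<Longrightarrow> k \<le> N \<Longrightarrow> node g a b i \<le> node g a b k"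
proof -
  assume h: "i \<le> k" "k \<le> N"
  consider "i = k" | "i = 0" | "1 \<le> i \<and> i < k" using h by linarith
  then show ?thesis
  proof cases
    case 2 then show ?thesis using node_0 node_bounds[OF h(2)] by simp
  next
    case 3 then show ?thesis using node_strict[of i k] h by simp
  qed simp
qed

lemma piece_1: "piece g a b 1 = {a .. node g a b 1}" by (simp add: piece_def node_0)
lemma piece_ge2: "j \<noteq> 1 \<Longrightarrow> piece g a b j = {node g a b (j-1) <.. node g a b j}"
  by (simp add: piece_def)

lemma piece_le: "x \<in> piece g a b j \<Longrightarrow> x \<le> node g a b j"
  unfolding piece_def by (auto split: if_splits)
lemma piece_gt: "x \<in> piece g a b j \<Longrightarrow> 2 \<le> j \<Longrightarrow> node g a b (j - 1) < x"
  by (auto simp: piece_ge2)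

lemma piece_sub: "1 \<le> j \<Longrightarrow> j \<le> N \<Longrightarrow> piece g a b j \<subseteq> {a..b}"
proof
  fix x assume j: "1 \<le> j" "j \<le> N" and x: "x \<in> piece g a b j"
  have "x \<le> b" using piece_le[OF x] node_bounds[OF j(2)] by linarith
  moreover have "a \<le> x"
  proof (cases "j = 1")
    case True then show ?thesis using x piece_1 by auto
  next
    case False
    then show ?thesis using piece_gt[OF x] node_bounds[of "j-1"] j by force
  qed
  ultimately show "x \<in> {a..b}" by simp
qed

lemma piece_ne: "1 \<le> j \<Longrightarrow> j \<le> N \<Longrightarrow> piece g a b j \<noteq> {}"
proof -
  assume j: "1 \<le> j" "j \<le> N"
  show ?thesis
  proof (cases "j = 1")
    case True then show ?thesis using piece_1 node_bounds[of 1] j by auto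
  next
    case False
    then have "node g a b (j-1) < node g a b j" using node_strict[of "j-1" j] j by simp
    then show ?thesis using piece_ge2[OF False] by auto
  qed
qed

lemma piece_cover: "x \<in> {a..b} \<Longrightarrow> \<exists>j\<in>{1..N}. x \<in> piece g a b j"
proof -
  assume x: "x \<in> {a..b}"
  define j where "j = (LEAST k. 1 \<le> k \<and> x \<le> node g a b k)"
  have P: "1 \<le> N \<and> x \<le> node g a b N" using x node_N N_eq by simp
  have jP: "1 \<le> j \<and> x \<le> node g a b j" unfolding j_def by (rule LeastI[of _ N], rule P)
  have jN: "j \<le> N" unfolding j_def by (rule Least_le, rule P)
  show ?thesis
  proof (cases "j = 1")
    case True then show ?thesis using jP x piece_1 jN by (intro bexI[of _ 1]) auto
  next
    case False
    have "j - 1 < j" using jP by simp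
    then have "\<not> (1 \<le> j - 1 \<and> x \<le> node g a b (j - 1))"
      unfolding j_def by (rule not_less_Least)
    then have "node g a b (j - 1) < x" using False jP by auto
    then show ?thesis using jP jN piece_ge2[OF False] by (intro bexI[of _ j]) auto
  qed
qed

lemma piece_disj: "x \<in> piece g a b i \<Longrightarrow> x \<in> piece g a b j \<Longrightarrow> 1 \<le> i \<Longrightarrow> i < j \<Longrightarrow> j \<le> N \<Longrightarrow> False"
proof -
  assume h: "x \<in> piece g a b i" "x \<in> piece g a b j" "1 \<le> i" "i < j" "j \<le> N"
  have "x \<le> node g a b i" using piece_le[OF h(1)] .
  also have "\<dots> \<le> node g a b (j - 1)" using node_mono[of i "j - 1"] h by simp
  also have "\<dots> < x" using piece_gt[OF h(2)] h by simp
  finally show False by simp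
qed

lemma piece_unique: "x \<in> piece g a b i \<Longrightarrow> x \<in> piece g a b j \<Longrightarrow> i \<in> {1..N} \<Longrightarrow> j \<in> {1..N} \<Longrightarrow> i = j"
proof -
  assume h: "x \<in> piece g a b i" "x \<in> piece g a b j" "i \<in> {1..N}" "j \<in> {1..N}"
  show "i = j"
  proof (rule linorder_cases[of i j])
    assume "i < j" then show ?thesis using piece_disj[of x i j] h by auto
  next
    assume "j < i" then show ?thesis using piece_disj[of x j i] h by auto
  qed
qed

lemma gap: "x \<in> piece g a b i \<Longrightarrow> y \<in> piece g a b j \<Longrightarrow> 1 \<le> i \<Longrightarrow> i < j \<Longrightarrow> j \<le> N
   \<Longrightarrow> jump g (node g a b i) \<le> g y - g x \<and> node g a b i \<in> D"
proof -
  assume h: "x \<in> piece g a b i" "y \<in> piece g a b j" "1 \<le> i" "i < j" "j \<le> N"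
  have pD: "node g a b i \<in> D" using node_in_D[of i] h N_eq by simp
  have xab: "x \<in> {a..b}" using piece_sub[of i] h by auto
  have yab: "y \<in> {a..b}" using piece_sub[of j] h by auto
  have "node g a b i \<le> node g a b (j - 1)" using node_mono[of i "j-1"] h by simp
  also have "\<dots> < y" using piece_gt[of y j] h by simp
  finally have "node g a b i < y" .
  then show ?thesis using jump_gap[OF der, of "node g a b i" x y] pD D_sub xab yab piece_le[OF h(1)] by auto
qed

lemma below_iff: "x \<in> piece g a b j \<Longrightarrow> 1 \<le> j \<Longrightarrow> j \<le> N \<Longrightarrow> i < m \<Longrightarrow> (L ! i < x \<longleftrightarrow> i + 1 < j)"
proof -
  assume h: "x \<in> piece g a b j" "1 \<le> j" "j \<le> N" "i < m"
  have Li: "L ! i = node g a b (i+1)" using node_L[of "i+1"] h by simp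
  show ?thesis
  proof
    assume "L ! i < x"
    show "i + 1 < j"
    proof (rule ccontr)
      assume "\<not> i + 1 < j"
      then have "node g a b j \<le> node g a b (i+1)" using node_mono[of j "i+1"] h N_eq by simp
      then show False using piece_le[OF h(1)] Li \<open>L ! i < x\<close> by simp
    qed
  next
    assume "i + 1 < j"
    then have "node g a b (i+1) \<le> node g a b (j-1)" using node_mono[of "i+1" "j-1"] h by simp
    then show "L ! i < x" using piece_gt[OF h(1)] Li \<open>i + 1 < j\<close> by simp
  qed
qed

lemma gB_const: "x \<in> piece g a b j \<Longrightarrow> y \<in> piece g a b j \<Longrightarrow> 1 \<le> j \<Longrightarrow> j \<le> N \<Longrightarrow> gB g a b x = gB g a b y"
proof -
  assume h: "x \<in> piece g a b j" "y \<in> piece g a b j" "1 \<le> j" "j \<le> N"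
  have "z < x \<longleftrightarrow> z < y" if z: "z \<in> D" for z
  proof -
    obtain i where i: "i < m" "z = L ! i" using z L_set by (metis L_len in_set_conv_nth)
    show ?thesis using below_iff[OF h(1) h(3) h(4) i(1)] below_iff[OF h(2) h(3) h(4) i(1)] i by simp
  qed
  then have "{a..<x} \<inter> D = {a..<y} \<inter> D" using D_sub by auto
  then show ?thesis by (simp add: gB_def)
qed

lemma gC_diff: "x \<in> piece g a b j \<Longrightarrow> y \<in> piece g a b j \<Longrightarrow> 1 \<le> j \<Longrightarrow> j \<le> N \<Longrightarrow> gC g a b x - gC g a b y = g x - g y"
  using gB_const[of x j y] by (simp add: gC_def)

end


theorem mainTheorem16:
  fixes g :: "real \<Rightarrow> real" and a b :: real
    and UCg :: "(real \<Rightarrow> 'a::real_normed_field) set"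
  assumes "a < b" and "derivator g a b" and "finite (Dg g a b)"
  defines "n \<equiv> nparts g a b" and "UCg \<equiv> UC g {a..b}"
  shows "(\<forall>f \<in> UCg. \<forall>j\<in>{1..n}.
            Psi g a b f j \<in> UC (gC g a b) (piece g a b j))
       \<and> (\<forall>f \<in> UCg. \<forall>h \<in> UCg. \<forall>c::'a.
            Psi g a b (\<lambda>x. c * f x + h x) = (\<lambda>j x. c * Psi g a b f j x + Psi g a b h j x))
       \<and> (\<forall>f \<in> UCg. \<forall>h \<in> UCg. Psi g a b f = Psi g a b h \<longrightarrow> f = h)
       \<and> (\<forall>v :: nat \<Rightarrow> real \<Rightarrow> 'a. (\<forall>j\<in>{1..n}. v j \<in> UC (gC g a b) (piece g a b j))
            \<and> (\<forall>j. j \<notin> {1..n} \<longrightarrow> v j = (\<lambda>_. 0))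
            \<longrightarrow> (\<exists>f \<in> UCg. Psi g a b f = v))
       \<and> (\<forall>f \<in> UCg.
            supnorm {a..b} f = Max ((\<lambda>j. supnorm (piece g a b j) (Psi g a b f j)) ` {1..n}))"
proof -
  interpret S: setting g a b using assms(1-3) by unfold_locales
  have PsiE: "Psi g a b f j = restr (piece g a b j) f" if "j \<in> {1..n}" for f :: "real \<Rightarrow> 'a" and j
    using that by (simp add: Psi_def n_def)
  have PsiO: "Psi g a b f j = (\<lambda>_. 0)" if "j \<notin> {1..n}" for f :: "real \<Rightarrow> 'a" and j
    using that unfolding Psi_def n_def by auto
  have sub: "piece g a b j \<subseteq> {a..b}" if "j \<in> {1..n}" for j
    using S.piece_sub that n_def by auto
  have cover: "\<exists>j\<in>{1..n}. x \<in> piece g a b j" if "x \<in> {a..b}" for x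
    using S.piece_cover[OF that] n_def by simp
  have uniq: "i = j" if "x \<in> piece g a b i" "x \<in> piece g a b j" "i \<in> {1..n}" "j \<in> {1..n}" for x i j
    using S.piece_unique[OF that(1,2)] that(3,4) n_def by simp
  have gCd: "gC g a b x - gC g a b y = g x - g y" if "x \<in> piece g a b j" "y \<in> piece g a b j" "j \<in> {1..n}" for x y j
    using S.gC_diff[OF that(1,2)] that(3) n_def by simp

  have P1: "\<forall>f \<in> UCg. \<forall>j\<in>{1..n}. Psi g a b f j \<in> UC (gC g a b) (piece g a b j)"
  proof (intro ballI)
    fix f j assume f: "f \<in> UCg" and j: "j \<in> {1..n}"
    have uc: "unif_cont_wrt g {a..b} f" using f by (simp add: UCg_def UC_def)
    have "unif_cont_wrt (gC g a b) (piece g a b j) (restr (piece g a b j) f)"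
      unfolding unif_cont_wrt_def
    proof (intro allI impI)
      fix e :: real assume e: "e > 0"
      obtain d where d: "d > 0" "\<forall>x\<in>{a..b}. \<forall>y\<in>{a..b}. \<bar>g x - g y\<bar> < d \<longrightarrow> norm (f x - f y) < e"
        using uc e unfolding unif_cont_wrt_def by blast
      show "\<exists>d>0. \<forall>x\<in>piece g a b j. \<forall>y\<in>piece g a b j. \<bar>gC g a b x - gC g a b y\<bar> < d \<longrightarrow>
              norm (restr (piece g a b j) f x - restr (piece g a b j) f y) < e"
      proof (intro exI[of _ d] conjI ballI impI)
        fix x y assume x: "x \<in> piece g a b j" and y: "y \<in> piece g a b j"
          and lt: "\<bar>gC g a b x - gC g a b y\<bar> < d"
        have "\<bar>g x - g y\<bar> < d" using gCd[OF x y j] lt by simp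
        moreover have "x \<in> {a..b}" "y \<in> {a..b}" using sub[OF j] x y by auto
        ultimately show "norm (restr (piece g a b j) f x - restr (piece g a b j) f y) < e"
          using d(2) x y by (simp add: restr_def)
      qed (rule d(1))
    qed
    then show "Psi g a b f j \<in> UC (gC g a b) (piece g a b j)"
      using j by (simp add: PsiE UC_def restr_def)
  qed

  have P2: "\<forall>f \<in> UCg. \<forall>h \<in> UCg. \<forall>c::'a.
            Psi g a b (\<lambda>x. c * f x + h x) = (\<lambda>j x. c * Psi g a b f j x + Psi g a b h j x)"
    by (auto simp: Psi_def restr_def fun_eq_iff)

  have P3: "\<forall>f \<in> UCg. \<forall>h \<in> UCg. Psi g a b f = Psi g a b h \<longrightarrow> f = h"
  proof (intro ballI impI)
    fix f h assume f: "f \<in> UCg" and h: "h \<in> UCg" and eq: "Psi g a b f = Psi g a b h"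
    show "f = h"
    proof
      fix x
      show "f x = h x"
      proof (cases "x \<in> {a..b}")
        case True
        then obtain j where j: "j \<in> {1..n}" "x \<in> piece g a b j" using cover by blast
        have "Psi g a b f j x = Psi g a b h j x" using eq by simp
        then show ?thesis using j by (simp add: PsiE restr_def)
      next
        case False
        then show ?thesis using f h by (simp add: UCg_def UC_def)
      qed
    qed
  qed

  have P4: "\<forall>v :: nat \<Rightarrow> real \<Rightarrow> 'a. (\<forall>j\<in>{1..n}. v j \<in> UC (gC g a b) (piece g a b j))
            \<and> (\<forall>j. j \<notin> {1..n} \<longrightarrow> v j = (\<lambda>_. 0))
            \<longrightarrow> (\<exists>f \<in> UCg. Psi g a b f = v)"
  proof (intro allI impI)
    fix v :: "nat \<Rightarrow> real \<Rightarrow> 'a"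
    assume hv: "(\<forall>j\<in>{1..n}. v j \<in> UC (gC g a b) (piece g a b j)) \<and> (\<forall>j. j \<notin> {1..n} \<longrightarrow> v j = (\<lambda>_. 0))"
    have vUC: "v j \<in> UC (gC g a b) (piece g a b j)" if "j \<in> {1..n}" for j using hv that by blast
    have vz: "v j x = 0" if "j \<in> {1..n}" "x \<notin> piece g a b j" for j x
      using vUC[OF that(1)] that(2) by (simp add: UC_def)
    have vuc: "unif_cont_wrt (gC g a b) (piece g a b j) (v j)" if "j \<in> {1..n}" for j
      using vUC[OF that] by (simp add: UC_def)
    define f where "f = (\<lambda>x. \<Sum>j\<in>{1..n}. v j x)"
    have fv: "f x = v j x" if j: "j \<in> {1..n}" and x: "x \<in> piece g a b j" for j x
    proof -
      have "f x = (\<Sum>i\<in>{1..n}. if i = j then v j x else 0)"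
        unfolding f_def
      proof (rule sum.cong)
        fix i assume i: "i \<in> {1..n}"
        show "v i x = (if i = j then v j x else 0)"
        proof (cases "i = j")
          case False
          then have "x \<notin> piece g a b i" using uniq[of x i j] i j x by blast
          then show ?thesis using vz[OF i] False by simp
        qed simp
      qed simp
      also have "\<dots> = v j x" using j by (simp add: sum.delta)
      finally show ?thesis .
    qed
    have f0: "f x = 0" if "x \<notin> {a..b}" for x
      unfolding f_def using vz sub that by (intro sum.neutral) blast
    have fuc: "unif_cont_wrt g {a..b} f"
      unfolding unif_cont_wrt_def
    proof (intro allI impI)
      fix e :: real assume e: "e > 0"
      have "\<forall>j\<in>{1..n}. \<exists>d>0. \<forall>x\<in>piece g a b j. \<forall>y\<in>piece g a b j.
              \<bar>gC g a b x - gC g a b y\<bar> < d \<longrightarrow> norm (v j x - v j y) < e"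
        using vuc e unfolding unif_cont_wrt_def by blast
      then obtain dd where dd: "\<forall>j\<in>{1..n}. dd j > 0 \<and> (\<forall>x\<in>piece g a b j. \<forall>y\<in>piece g a b j.
              \<bar>gC g a b x - gC g a b y\<bar> < dd j \<longrightarrow> norm (v j x - v j y) < e)"
        by (metis (no_types, lifting) bchoice)
      define d0 where "d0 = Min (insert 1 (jump g ` Dg g a b))"
      have fJ: "finite (insert 1 (jump g ` Dg g a b))" using assms(3) by simp
      have d0pos: "d0 > 0" unfolding d0_def using fJ by (auto simp: Dg_def)
      have d0le: "d0 \<le> jump g p" if "p \<in> Dg g a b" for p
        unfolding d0_def using fJ that by simp
      define d where "d = Min (insert d0 (dd ` {1..n}))"
      have fJ2: "finite (insert d0 (dd ` {1..n}))" by simp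
      have dpos: "d > 0" unfolding d_def using fJ2 d0pos dd by auto
      have dled0: "d \<le> d0" unfolding d_def using fJ2 by simp
      have dledd: "d \<le> dd j" if "j \<in> {1..n}" for j unfolding d_def by (rule Min_le[OF fJ2]) (use that in auto)
      have cross: "False" if "x \<in> piece g a b i" "y \<in> piece g a b j" "i \<in> {1..n}" "j \<in> {1..n}" "i < j"
        "\<bar>g x - g y\<bar> < d" for x y i j
      proof -
        have "jump g (node g a b i) \<le> g y - g x \<and> node g a b i \<in> Dg g a b"
          using S.gap[OF that(1,2)] that(3,4,5) n_def by simp
        then have "d0 \<le> g y - g x" using d0le by force
        then show False using that(6) dled0 by linarith
      qed
      show "\<exists>d>0. \<forall>x\<in>{a..b}. \<forall>y\<in>{a..b}. \<bar>g x - g y\<bar> < d \<longrightarrow> norm (f x - f y) < e"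
      proof (intro exI[of _ d] conjI ballI impI)
        fix x y assume x: "x \<in> {a..b}" and y: "y \<in> {a..b}" and lt: "\<bar>g x - g y\<bar> < d"
        obtain i where i: "i \<in> {1..n}" "x \<in> piece g a b i" using cover[OF x] by blast
        obtain j where j: "j \<in> {1..n}" "y \<in> piece g a b j" using cover[OF y] by blast
        have "i = j"
        proof (rule linorder_cases[of i j])
          assume "i < j" then show ?thesis using cross[OF i(2) j(2) i(1) j(1)] lt by blast
        next
          assume "j < i" then show ?thesis using cross[OF j(2) i(2) j(1) i(1)] lt by (simp add: abs_minus_commute)
        qed
        then have "\<bar>gC g a b x - gC g a b y\<bar> < dd j"
          using gCd[of x j y] i j lt dledd[OF j(1)] by simp
        then have "norm (v j x - v j y) < e" using dd j i \<open>i = j\<close> by blast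
        then show "norm (f x - f y) < e" using fv i j \<open>i = j\<close> by simp
      qed (rule dpos)
    qed
    have fUC: "f \<in> UCg" unfolding UCg_def UC_def using f0 fuc by blast
    have "Psi g a b f = v"
    proof
      fix j
      show "Psi g a b f j = v j"
      proof (cases "j \<in> {1..n}")
        case True
        show ?thesis
        proof
          fix x
          show "Psi g a b f j x = v j x"
            using True fv[OF True] vz[OF True] by (simp add: PsiE restr_def)
        qed
      next
        case False
        then show ?thesis using PsiO hv by simp
      qed
    qed
    then show "\<exists>f \<in> UCg. Psi g a b f = v" using fUC by blast
  qed

  have P5: "\<forall>f \<in> UCg.
            supnorm {a..b} f = Max ((\<lambda>j. supnorm (piece g a b j) (Psi g a b f j)) ` {1..n})"
  proof
    fix f assume f: "f \<in> UCg"
    have uc: "unif_cont_wrt g {a..b} f" using f by (simp add: UCg_def UC_def)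
    obtain B where B: "\<forall>x\<in>{a..b}. norm (f x) \<le> B"
      using uc_bounded[OF S.mono _ uc] assms(1) by fastforce
    have bdd: "bdd_above ((\<lambda>x. norm (f x)) ` {a..b})" using B by (intro bdd_aboveI2) blast
    define F where "F = (\<lambda>j. supnorm (piece g a b j) (Psi g a b f j))"
    have Fj: "F j = (SUP x\<in>piece g a b j. norm (f x))" if "j \<in> {1..n}" for j
      unfolding F_def supnorm_def PsiE[OF that] restr_def by (rule SUP_cong) auto
    have fin: "finite (F ` {1..n})" by simp
    have ne: "F ` {1..n} \<noteq> {}" using n_def by (simp add: nparts_def)
    have pne: "piece g a b j \<noteq> {}" if "j \<in> {1..n}" for j
      using S.piece_ne that n_def by simp
    have bddj: "bdd_above ((\<lambda>x. norm (f x)) ` piece g a b j)" if "j \<in> {1..n}" for j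
      using B sub[OF that] by (intro bdd_aboveI2) blast
    have le1: "supnorm {a..b} f \<le> Max (F ` {1..n})"
      unfolding supnorm_def
    proof (rule cSUP_least)
      show "{a..b} \<noteq> {}" using assms(1) by simp
    next
      fix x assume x: "x \<in> {a..b}"
      obtain j where j: "j \<in> {1..n}" "x \<in> piece g a b j" using cover[OF x] by blast
      have "norm (f x) \<le> (SUP x\<in>piece g a b j. norm (f x))" by (rule cSUP_upper[OF j(2) bddj[OF j(1)]])
      also have "\<dots> = F j" using Fj[OF j(1)] by simp
      also have "\<dots> \<le> Max (F ` {1..n})" using fin j(1) by simp
      finally show "norm (f x) \<le> Max (F ` {1..n})" .
    qed
    have le2: "Max (F ` {1..n}) \<le> supnorm {a..b} f"
    proof -
      have "F j \<le> supnorm {a..b} f" if j: "j \<in> {1..n}" for j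
        unfolding Fj[OF j] supnorm_def
        by (rule cSUP_subset_mono[OF pne[OF j] bdd sub[OF j]]) simp
      then show ?thesis using fin ne by simp
    qed
    show "supnorm {a..b} f = Max ((\<lambda>j. supnorm (piece g a b j) (Psi g a b f j)) ` {1..n})"
      using le1 le2 unfolding F_def by simp
  qed
  show ?thesis using P1 P2 P3 P4 P5 by blast
qed

end
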